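(* Let $mG$, $mG'$ be finite canonical misinformation games and $t\ge0$. If $mG'\in\mathcal{AD}^{(t)}(\{mG\})$ and $mG'\in\mathcal{AD}(\{mG'\})$, then $mG'\in\mathcal{AD}^\infty(\{mG\})$.
   Context: A normal-form game is $G=\langle N,S,P\rangle$ with finite players $N$, finite pure strategy sets $S_i$, positions $S=\times_i S_i$, payoffs $P_i:S\to\mathbb{R}$. A misinformation game $mG=\langle G^0,G^1,\dots,G^{|N|}\rangle$ consists of the actual game $G^0$ and subjective games $G^i$; it is canonical if all $G^i=\langle N,S,P^i\rangle$ differ from $G^0$ only in payoffs and in every $G^i$ all players have equally many pure strategies. $NME(mG)$ is the set of profiles $\sigma=(\sigma_1,\dots,\sigma_{|N|})$ such that each $\sigma_i$ is player $i$'s component of some Nash equilibrium of $G^i$. $\chi(\sigma)=\mathrm{supp}(\sigma_1)\times\dots\times\mathrm{supp}(\sigma_{|N|})$. For $\vec v\in S$, $mG_{\vec v}$ is obtained by replacing, in every $P^i$ ($i\ge1$), the payoff vector at position $\vec v$ by $P^0(\vec v)$. For a set $M$ of misinformation games, $\mathcal{AD}(M)=\{mG_{\vec u}: mG\in M,\sigma\in NME(mG),\vec u\in\chi(\sigma)\}$, $\mathcal{AD}^{(0)}(M)=M$, $\mathcal{AD}^{(t+1)}(M)=\mathcal{AD}^{(t)}(\mathcal{AD}(M))$; the length $\mathfrak{L}$ is the least $t\ge0$ with $\mathcal{AD}^{(t+1)}(M)=\mathcal{AD}^{(t)}(M)$ and $\mathcal{AD}^\infty(M)=\mathcal{AD}^{(\mathfrak{L})}(M)$.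 *)

theory Defs
  imports Complex_Main "HOL-Library.FuncSet"
begin

text \<open>Players are 0,...,n-1; every player's pure strategies are 0,...,m-1
  (canonical: all games share N and S, and all players have equally many strategies).
  A misinformation game is a function g :: nat => nat => (nat => nat) => real, where
  g k i v is the payoff of player i at position v in game G^k; k = 0 is the actual game,
  k = Suc i is the subjective game of player i.\<close>

type_synonym mgame = "nat \<Rightarrow> nat \<Rightarrow> (nat \<Rightarrow> nat) \<Rightarrow> real"

definition positions :: "nat \<Rightarrow> nat \<Rightarrow> (nat \<Rightarrow> nat) set" where
  "positions n m = Pi\<^sub>E {..<n} (\<lambda>_. {..<m})"

definition canonical_mg :: "nat \<Rightarrow> nat \<Rightarrow> mgame \<Rightarrow> bool" where
  "canonical_mg n m g \<longleftrightarrow> 1 \<le> m \<and>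
     (\<forall>k i v. \<not> (k \<le> n \<and> i < n \<and> v \<in> positions n m) \<longrightarrow> g k i v = 0)"

definition mixed :: "nat \<Rightarrow> (nat \<Rightarrow> real) \<Rightarrow> bool" where
  "mixed m s \<longleftrightarrow> (\<forall>a. 0 \<le> s a) \<and> (\<forall>a. m \<le> a \<longrightarrow> s a = 0) \<and> (\<Sum>a<m. s a) = 1"

definition exp_payoff :: "nat \<Rightarrow> nat \<Rightarrow> (nat \<Rightarrow> (nat \<Rightarrow> nat) \<Rightarrow> real) \<Rightarrow> nat
    \<Rightarrow> (nat \<Rightarrow> nat \<Rightarrow> real) \<Rightarrow> real" where
  "exp_payoff n m P i \<sigma> = (\<Sum>v\<in>positions n m. (\<Prod>j<n. \<sigma> j (v j)) * P i v)"

definition nash :: "nat \<Rightarrow> nat \<Rightarrow> (nat \<Rightarrow> (nat \<Rightarrow> nat) \<Rightarrow> real)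
    \<Rightarrow> (nat \<Rightarrow> nat \<Rightarrow> real) \<Rightarrow> bool" where
  "nash n m P \<sigma> \<longleftrightarrow> (\<forall>i<n. mixed m (\<sigma> i)) \<and>
     (\<forall>i<n. \<forall>\<tau>. mixed m \<tau> \<longrightarrow> exp_payoff n m P i (\<sigma>(i := \<tau>)) \<le> exp_payoff n m P i \<sigma>)"

definition nme :: "nat \<Rightarrow> nat \<Rightarrow> mgame \<Rightarrow> (nat \<Rightarrow> nat \<Rightarrow> real) \<Rightarrow> bool" where
  "nme n m g \<sigma> \<longleftrightarrow> (\<forall>i<n. \<exists>\<tau>. nash n m (g (Suc i)) \<tau> \<and> \<sigma> i = \<tau> i)"

definition chi :: "nat \<Rightarrow> nat \<Rightarrow> (nat \<Rightarrow> nat \<Rightarrow> real) \<Rightarrow> (nat \<Rightarrow> nat) set" where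
  "chi n m \<sigma> = {v \<in> positions n m. \<forall>i<n. 0 < \<sigma> i (v i)}"

definition upd :: "nat \<Rightarrow> mgame \<Rightarrow> (nat \<Rightarrow> nat) \<Rightarrow> mgame" where
  "upd n g v = (\<lambda>k i w. if 1 \<le> k \<and> k \<le> n \<and> w = v then g 0 i w else g k i w)"

definition AD :: "nat \<Rightarrow> nat \<Rightarrow> mgame set \<Rightarrow> mgame set" where
  "AD n m M = {upd n g u | g \<sigma> u. g \<in> M \<and> nme n m g \<sigma> \<and> u \<in> chi n m \<sigma>}"

definition AD_iter :: "nat \<Rightarrow> nat \<Rightarrow> nat \<Rightarrow> mgame set \<Rightarrow> mgame set" where
  "AD_iter n m t M = (AD n m ^^ t) M"

definition AD_length :: "nat \<Rightarrow> nat \<Rightarrow> mgame set \<Rightarrow> nat" where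
  "AD_length n m M = (LEAST t. AD_iter n m (Suc t) M = AD_iter n m t M)"

definition AD_inf :: "nat \<Rightarrow> nat \<Rightarrow> mgame set \<Rightarrow> mgame set" where
  "AD_inf n m M = AD_iter n m (AD_length n m M) M"

end

theory Submission
  imports Defs
begin

definition bad :: "nat \<Rightarrow> nat \<Rightarrow> mgame \<Rightarrow> (nat \<Rightarrow> nat) set" where
  "bad n m h = {v \<in> positions n m. \<not> (\<forall>k i. 1 \<le> k \<and> k \<le> n \<longrightarrow> h k i v = h 0 i v)}"

definition mu :: "nat \<Rightarrow> nat \<Rightarrow> mgame \<Rightarrow> nat" where
  "mu n m h = card (bad n m h)"

definition Rel :: "nat \<Rightarrow> nat \<Rightarrow> (mgame \<times> mgame) set" where
  "Rel n m = {(h, h'). h' \<in> AD n m {h}}"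

lemma fin_bad: "finite (bad n m h)"
proof -
  have "finite (positions n m)" unfolding positions_def by (simp add: finite_PiE)
  then show ?thesis unfolding bad_def by simp
qed

lemma upd_good: "u \<notin> bad n m h \<Longrightarrow> u \<in> positions n m \<Longrightarrow> upd n h u = h"
  unfolding bad_def upd_def by (intro ext) auto

lemma bad_upd: "bad n m (upd n h u) = bad n m h - {u}"
  unfolding bad_def upd_def by auto

lemma step_mu:
  assumes "h' \<in> AD n m {h}" "h' \<noteq> h"
  shows "mu n m h' < mu n m h"
proof -
  obtain \<sigma> u where h': "h' = upd n h u" and u: "u \<in> chi n m \<sigma>"
    using assms(1) unfolding AD_def by auto
  have up: "u \<in> positions n m" using u unfolding chi_def by auto
  have "u \<in> bad n m h" using upd_good[OF _ up] h' assms(2) by blast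
  then have "card (bad n m h) > 0" using fin_bad card_gt_0_iff by blast
  with \<open>u \<in> bad n m h\<close> show ?thesis unfolding mu_def h' bad_upd
    using fin_bad by simp
qed

lemma AD_Rel: "AD n m M = Rel n m `` M"
  unfolding AD_def Rel_def by auto

lemma iter_Rel: "(AD n m ^^ t) M = (Rel n m ^^ t) `` M"
proof (induction t)
  case 0 then show ?case by simp
next
  case (Suc t)
  have "(AD n m ^^ Suc t) M = AD n m ((AD n m ^^ t) M)" by simp
  also have "\<dots> = Rel n m `` ((AD n m ^^ t) M)" by (rule AD_Rel)
  also have "\<dots> = Rel n m `` ((Rel n m ^^ t) `` M)" by (simp only: Suc)
  also have "\<dots> = (Rel n m ^^ t O Rel n m) `` M" by blast
  finally show ?case by simp
qed

lemma shrink: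
  "(g, h) \<in> Rel n m ^^ Suc t \<Longrightarrow> mu n m g \<le> t \<Longrightarrow> (g, h) \<in> Rel n m ^^ t"
proof (induction t arbitrary: g)
  case 0
  then obtain g1 where g1: "(g, g1) \<in> Rel n m" "(g1, h) \<in> Rel n m ^^ 0"
    using relpow_Suc_D2 by metis
  have "g1 = g"
  proof (rule ccontr)
    assume "g1 \<noteq> g"
    then have "mu n m g1 < mu n m g" using step_mu g1(1) unfolding Rel_def by auto
    then show False using 0 by simp
  qed
  then show ?case using g1 by simp
next
  case (Suc t)
  obtain g1 where g1: "(g, g1) \<in> Rel n m" "(g1, h) \<in> Rel n m ^^ Suc t"
    using relpow_Suc_D2[OF Suc.prems(1)] by metis
  show ?case
  proof (cases "g1 = g")
    case True then show ?thesis using g1 by simp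
  next
    case False
    then have "mu n m g1 < mu n m g" using step_mu g1(1) unfolding Rel_def by auto
    then have "(g1, h) \<in> Rel n m ^^ t" using Suc.IH g1(2) Suc.prems(2) by auto
    then show ?thesis using g1(1) by (meson relpow_Suc_I2)
  qed
qed

lemma grow:
  "(g, h) \<in> Rel n m ^^ t \<Longrightarrow> mu n m g < t \<Longrightarrow> (g, h) \<in> Rel n m ^^ Suc t"
proof (induction t arbitrary: g)
  case 0 then show ?case by simp
next
  case (Suc t)
  obtain g1 where g1: "(g, g1) \<in> Rel n m" "(g1, h) \<in> Rel n m ^^ t"
    using relpow_Suc_D2[OF Suc.prems(1)] by metis
  show ?case
  proof (cases "g1 = g")
    case True then show ?thesis using g1 Suc.prems(1) by (meson relpow_Suc_I2)
  next
    case False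
    then have "mu n m g1 < mu n m g" using step_mu g1(1) unfolding Rel_def by auto
    then have "(g1, h) \<in> Rel n m ^^ Suc t" using Suc.IH g1(2) Suc.prems(2) by auto
    then show ?thesis using g1(1) by (meson relpow_Suc_I2)
  qed
qed

lemma fix_exists: "AD_iter n m (Suc (Suc (mu n m g))) {g} = AD_iter n m (Suc (mu n m g)) {g}"
proof -
  let ?t = "Suc (mu n m g)"
  have "(Rel n m ^^ Suc ?t) `` {g} = (Rel n m ^^ ?t) `` {g}"
  proof
    show "(Rel n m ^^ Suc ?t) `` {g} \<subseteq> (Rel n m ^^ ?t) `` {g}"
      using shrink[where g=g and n=n and m=m and t="?t"] by auto
    show "(Rel n m ^^ ?t) `` {g} \<subseteq> (Rel n m ^^ Suc ?t) `` {g}"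
      using grow[where g=g and n=n and m=m and t="?t"] by auto
  qed
  then show ?thesis unfolding AD_iter_def iter_Rel .
qed

lemma AD_mono: "A \<subseteq> B \<Longrightarrow> AD n m A \<subseteq> AD n m B"
  unfolding AD_def by blast

lemma stable_from:
  assumes "AD_iter n m (Suc L) M = AD_iter n m L M"
  shows "AD_iter n m (L + k) M = AD_iter n m L M"
proof (induction k)
  case 0 then show ?case by simp
next
  case (Suc k)
  have "AD_iter n m (L + Suc k) M = AD n m (AD_iter n m (L + k) M)"
    unfolding AD_iter_def by simp
  also have "\<dots> = AD n m (AD_iter n m L M)" using Suc by simp
  also have "\<dots> = AD_iter n m (Suc L) M" unfolding AD_iter_def by simp
  finally show ?case using assms by simp
qed

lemma persist:
  assumes "g' \<in> AD_iter n m t M" "g' \<in> AD n m {g'}"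
  shows "g' \<in> AD_iter n m (t + k) M"
proof (induction k)
  case 0 then show ?case using assms(1) by simp
next
  case (Suc k)
  have "AD n m {g'} \<subseteq> AD n m (AD_iter n m (t + k) M)"
    using Suc by (intro AD_mono) auto
  then show ?case using assms(2) unfolding AD_iter_def by auto
qed

theorem proposition10:
  fixes n m :: nat and g g' :: mgame and t :: nat
  assumes "canonical_mg n m g" and "canonical_mg n m g'"
    and "g' \<in> AD_iter n m t {g}"
    and "g' \<in> AD n m {g'}"
  shows "g' \<in> AD_inf n m {g}"
proof -
  let ?L = "AD_length n m {g}"
  have fx: "AD_iter n m (Suc ?L) {g} = AD_iter n m ?L {g}"
    unfolding AD_length_def by (rule LeastI[where P="\<lambda>t. AD_iter n m (Suc t) {g} = AD_iter n m t {g}", OF fix_exists])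
  have "g' \<in> AD_iter n m (t + ?L) {g}" using persist assms(3,4) by blast
  also have "AD_iter n m (t + ?L) {g} = AD_iter n m (?L + t) {g}" by (simp add: add.commute)
  also have "\<dots> = AD_iter n m ?L {g}" using stable_from[OF fx] .
  finally show ?thesis unfolding AD_inf_def .
qed

end
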